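(* If $(P,\tau,\leq)$ is a Priestley space, then $\tau \subseteq \tau_o(P)$.
   Context: A Priestley space is a triple $(P,\tau,\leq)$ where $(P,\leq)$ is a partially ordered set and $\tau$ is a compact topology on $P$ such that the space is totally order-disconnected: whenever $x\not\leq y$ there is a $\tau$-clopen up-set $U$ (i.e. $u\in U$, $u\leq v$ imply $v\in U$) with $x\in U$ and $y\notin U$. For $A\subseteq P$ let $A^l=\{x\in P: x\leq a \text{ for all } a\in A\}$ and $A^u=\{x\in P: x\geq a\text{ for all } a\in A\}$; for a family $\mathcal{S}$ of subsets of $P$ let $\mathcal{S}^l=\bigcup\{S^l: S\in\mathcal{S}\}$ and $\mathcal{S}^u=\bigcup\{S^u:S\in\mathcal{S}\}$. $\bigwedge A$ denotes the greatest element of $A^l$ (if it exists) and $\bigvee A$ the least element of $A^u$ (if it exists). A filter $\mathcal{F}$ on $P$ (a nonempty family of subsets of $P$ not containing $\emptyset$, closed under finite intersections and supersets) order-converges to $x\in P$ if $\bigwedge \mathcal{F}^u = x = \bigvee \mathcal{F}^l$. The order convergence topology is $\tau_o(P)=\{U\subseteq P: \text{for every } x\in U \text{ and every filter } \mathcal{F} \text{ on } P \text{ order-converging to } x, \ U\in\mathcal{F}\}$. *)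

theory Defs
  imports "HOL-Analysis.Analysis"
begin

definition partial_order_on_set :: "'a set \<Rightarrow> ('a \<Rightarrow> 'a \<Rightarrow> bool) \<Rightarrow> bool" where
  "partial_order_on_set P le \<longleftrightarrow>
     (\<forall>x\<in>P. le x x) \<and>
     (\<forall>x\<in>P. \<forall>y\<in>P. le x y \<and> le y x \<longrightarrow> x = y) \<and>
     (\<forall>x\<in>P. \<forall>y\<in>P. \<forall>z\<in>P. le x y \<and> le y z \<longrightarrow> le x z)"

definition is_up_set :: "'a set \<Rightarrow> ('a \<Rightarrow> 'a \<Rightarrow> bool) \<Rightarrow> 'a set \<Rightarrow> bool" where
  "is_up_set P le U \<longleftrightarrow> U \<subseteq> P \<and> (\<forall>u\<in>U. \<forall>v\<in>P. le u v \<longrightarrow> v \<in> U)"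

definition priestley_space :: "'a topology \<Rightarrow> ('a \<Rightarrow> 'a \<Rightarrow> bool) \<Rightarrow> bool" where
  "priestley_space tau le \<longleftrightarrow>
     partial_order_on_set (topspace tau) le \<and>
     compact_space tau \<and>
     (\<forall>x\<in>topspace tau. \<forall>y\<in>topspace tau. \<not> le x y \<longrightarrow>
        (\<exists>U. closedin tau U \<and> openin tau U \<and> is_up_set (topspace tau) le U \<and> x \<in> U \<and> y \<notin> U))"

definition lower_bounds :: "'a set \<Rightarrow> ('a \<Rightarrow> 'a \<Rightarrow> bool) \<Rightarrow> 'a set \<Rightarrow> 'a set" where
  "lower_bounds P le A = {x\<in>P. \<forall>a\<in>A. le x a}"

definition upper_bounds :: "'a set \<Rightarrow> ('a \<Rightarrow> 'a \<Rightarrow> bool) \<Rightarrow> 'a set \<Rightarrow> 'a set" where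
  "upper_bounds P le A = {x\<in>P. \<forall>a\<in>A. le a x}"

definition fam_lower :: "'a set \<Rightarrow> ('a \<Rightarrow> 'a \<Rightarrow> bool) \<Rightarrow> 'a set set \<Rightarrow> 'a set" where
  "fam_lower P le S = (\<Union>A\<in>S. lower_bounds P le A)"

definition fam_upper :: "'a set \<Rightarrow> ('a \<Rightarrow> 'a \<Rightarrow> bool) \<Rightarrow> 'a set set \<Rightarrow> 'a set" where
  "fam_upper P le S = (\<Union>A\<in>S. upper_bounds P le A)"

definition is_meet :: "'a set \<Rightarrow> ('a \<Rightarrow> 'a \<Rightarrow> bool) \<Rightarrow> 'a set \<Rightarrow> 'a \<Rightarrow> bool" where
  "is_meet P le A x \<longleftrightarrow> x \<in> lower_bounds P le A \<and> (\<forall>y\<in>lower_bounds P le A. le y x)"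

definition is_join :: "'a set \<Rightarrow> ('a \<Rightarrow> 'a \<Rightarrow> bool) \<Rightarrow> 'a set \<Rightarrow> 'a \<Rightarrow> bool" where
  "is_join P le A x \<longleftrightarrow> x \<in> upper_bounds P le A \<and> (\<forall>y\<in>upper_bounds P le A. le x y)"

definition set_filter_on :: "'a set \<Rightarrow> 'a set set \<Rightarrow> bool" where
  "set_filter_on P F \<longleftrightarrow>
     F \<noteq> {} \<and> (\<forall>A\<in>F. A \<subseteq> P) \<and> {} \<notin> F \<and>
     (\<forall>A\<in>F. \<forall>B\<in>F. A \<inter> B \<in> F) \<and>
     (\<forall>A\<in>F. \<forall>B. A \<subseteq> B \<and> B \<subseteq> P \<longrightarrow> B \<in> F)"

definition order_converges :: "'a set \<Rightarrow> ('a \<Rightarrow> 'a \<Rightarrow> bool) \<Rightarrow> 'a set set \<Rightarrow> 'a \<Rightarrow> bool" where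
  "order_converges P le F x \<longleftrightarrow>
     is_meet P le (fam_upper P le F) x \<and> is_join P le (fam_lower P le F) x"

definition order_convergence_topology :: "'a set \<Rightarrow> ('a \<Rightarrow> 'a \<Rightarrow> bool) \<Rightarrow> 'a set set" where
  "order_convergence_topology P le =
     {U. U \<subseteq> P \<and> (\<forall>x\<in>U. \<forall>F. set_filter_on P F \<and> order_converges P le F x \<longrightarrow> U \<in> F)}"

end

theory Submission
  imports Defs
begin

lemma filter_Inter:
  assumes "set_filter_on P F" "finite G" "G \<subseteq> F" "G \<noteq> {}"
  shows "\<Inter>G \<in> F"
  using assms(2,4,3)
proof (induction G rule: finite_ne_induct)
  case (singleton x) then show ?case by auto
next
  case (insert x G)
  have "\<forall>A\<in>F. \<forall>B\<in>F. A \<inter> B \<in> F" using assms(1) unfolding set_filter_on_def by (elim conjE)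
  moreover have "x \<in> F" "\<Inter>G \<in> F" using insert by blast+
  ultimately show ?case by simp
qed

lemma sep:
  assumes "priestley_space tau le" "x \<in> topspace tau" "y \<in> topspace tau" "\<not> le x y"
  obtains U where "closedin tau U" "openin tau U" "is_up_set (topspace tau) le U" "x \<in> U" "y \<notin> U"
proof -
  have "\<forall>x\<in>topspace tau. \<forall>y\<in>topspace tau. \<not> le x y \<longrightarrow>
        (\<exists>U. closedin tau U \<and> openin tau U \<and> is_up_set (topspace tau) le U \<and> x \<in> U \<and> y \<notin> U)"
    using assms(1) unfolding priestley_space_def by (elim conjE)
  then have "\<exists>U. closedin tau U \<and> openin tau U \<and> is_up_set (topspace tau) le U \<and> x \<in> U \<and> y \<notin> U"
    using assms(2,3,4) by blast
  then show ?thesis using that by blast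
qed

lemma closed_by_opens:
  assumes "S \<subseteq> topspace tau"
    and "\<And>z. z \<in> topspace tau \<Longrightarrow> z \<notin> S \<Longrightarrow> \<exists>T. openin tau T \<and> z \<in> T \<and> T \<inter> S = {}"
  shows "closedin tau S"
proof -
  have "openin tau (topspace tau - S)"
  proof (subst openin_subopen, intro ballI)
    fix z assume z: "z \<in> topspace tau - S"
    then obtain T where T: "openin tau T" "z \<in> T" "T \<inter> S = {}" using assms(2) by blast
    have "T \<subseteq> topspace tau" using T(1) by (rule openin_subset)
    then show "\<exists>T. openin tau T \<and> z \<in> T \<and> T \<subseteq> topspace tau - S" using T by blast
  qed
  then show ?thesis using assms(1) unfolding closedin_def by (intro conjI)
qed

lemma up_closed:
  assumes pr: "priestley_space tau le" "l \<in> topspace tau"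
  shows "closedin tau {z\<in>topspace tau. le l z}"
proof (rule closed_by_opens)
  show "{z\<in>topspace tau. le l z} \<subseteq> topspace tau" by blast
  fix z assume z: "z \<in> topspace tau" "z \<notin> {z\<in>topspace tau. le l z}"
  then have "\<not> le l z" by blast
  then obtain W where W: "closedin tau W" "openin tau W" "is_up_set (topspace tau) le W" "l \<in> W" "z \<notin> W"
    using sep[OF pr(1) pr(2) z(1)] by blast
  have "(topspace tau - W) \<inter> {z\<in>topspace tau. le l z} = {}"
    using W(3,4) unfolding is_up_set_def by blast
  moreover have "openin tau (topspace tau - W)" using W(1) by (rule openin_diff[OF openin_topspace])
  ultimately show "\<exists>T. openin tau T \<and> z \<in> T \<and> T \<inter> {z\<in>topspace tau. le l z} = {}"
    using z(1) W(5) by blast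
qed

lemma down_closed:
  assumes pr: "priestley_space tau le" "u \<in> topspace tau"
  shows "closedin tau {z\<in>topspace tau. le z u}"
proof (rule closed_by_opens)
  show "{z\<in>topspace tau. le z u} \<subseteq> topspace tau" by blast
  fix z assume z: "z \<in> topspace tau" "z \<notin> {z\<in>topspace tau. le z u}"
  then have "\<not> le z u" by blast
  then obtain W where W: "closedin tau W" "openin tau W" "is_up_set (topspace tau) le W" "z \<in> W" "u \<notin> W"
    using sep[OF pr(1) z(1) pr(2)] by blast
  have "W \<inter> {z\<in>topspace tau. le z u} = {}"
    using W(3,5) pr(2) unfolding is_up_set_def by blast
  then show "\<exists>T. openin tau T \<and> z \<in> T \<and> T \<inter> {z\<in>topspace tau. le z u} = {}"
    using W(2,4) by blast
qed

lemma key: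
  assumes pr: "priestley_space tau le"
    and F: "set_filter_on (topspace tau) F"
    and conv: "order_converges (topspace tau) le F x"
    and C: "closedin tau C"
    and meet: "\<forall>A\<in>F. A \<inter> C \<noteq> {}"
  shows "x \<in> C"
proof -
  let ?P = "topspace tau"
  define K where "K = (\<lambda>A. tau closure_of (A \<inter> C)) ` F"
  have APa: "\<forall>A\<in>F. A \<subseteq> ?P" using F unfolding set_filter_on_def by simp
  then have AP: "\<And>A. A \<in> F \<Longrightarrow> A \<subseteq> ?P" by blast
  have "\<Inter>K \<noteq> {}"
  proof -
    have cs: "compact_space tau" using pr unfolding priestley_space_def by simp
    have "\<forall>\<F>. finite \<F> \<and> \<F> \<subseteq> K \<longrightarrow> \<Inter>\<F> \<noteq> {}"
    proof (intro allI impI)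
      fix \<F> assume h: "finite \<F> \<and> \<F> \<subseteq> K"
      show "\<Inter>\<F> \<noteq> {}"
      proof (cases "\<F> = {}")
        case True then show ?thesis by simp
      next
        case False
        obtain G where G: "G \<subseteq> F" "finite G" "\<F> = (\<lambda>A. tau closure_of (A \<inter> C)) ` G"
          using h unfolding K_def by (metis finite_subset_image)
        with False have "G \<noteq> {}" by auto
        then have "\<Inter>G \<in> F" using filter_Inter[OF F G(2,1)] by auto
        then obtain z where z: "z \<in> \<Inter>G" "z \<in> C" using meet by blast
        have "z \<in> \<Inter>\<F>"
        proof
          fix S assume "S \<in> \<F>"
          then obtain A where A: "A \<in> G" "S = tau closure_of (A \<inter> C)" using G(3) by auto
          have "A \<inter> C \<subseteq> ?P" using AP A(1) G(1) by auto
          moreover have "z \<in> A \<inter> C" using A z by auto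
          ultimately show "z \<in> S" using closure_of_subset A(2) by blast
        qed
        then show ?thesis by auto
      qed
    qed
    moreover have "\<forall>S\<in>K. closedin tau S" unfolding K_def by auto
    moreover have "(\<forall>S\<in>K. closedin tau S) \<and> (\<forall>\<F>. finite \<F> \<and> \<F> \<subseteq> K \<longrightarrow> \<Inter>\<F> \<noteq> {}) \<longrightarrow> \<Inter>K \<noteq> {}"
      using cs unfolding compact_space_fip by (rule spec)
    ultimately show ?thesis by blast
  qed
  then obtain d where d: "d \<in> \<Inter>K" by blast
  have Fne: "F \<noteq> {}" using F unfolding set_filter_on_def by simp
  then obtain A0 where A0: "A0 \<in> F" by blast
  have dA: "\<And>A. A \<in> F \<Longrightarrow> d \<in> tau closure_of (A \<inter> C)"
  proof -
    fix A assume "A \<in> F"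
    then have "tau closure_of (A \<inter> C) \<in> K" unfolding K_def by (rule imageI)
    then show "d \<in> tau closure_of (A \<inter> C)" using d by (rule InterD[rotated])
  qed
  have "tau closure_of (A0 \<inter> C) \<subseteq> C"
    by (rule closure_of_minimal[OF _ C]) blast
  then have dC: "d \<in> C" using dA[OF A0] by blast
  have dP: "d \<in> ?P" using dC closedin_subset[OF C] by blast
  have up: "d \<in> upper_bounds ?P le (fam_lower ?P le F)"
    unfolding upper_bounds_def
  proof (intro CollectI conjI ballI dP)
    fix l assume "l \<in> fam_lower ?P le F"
    then obtain A where A: "A \<in> F" and lA: "l \<in> lower_bounds ?P le A" unfolding fam_lower_def by blast
    from lA have lP: "l \<in> ?P" and la: "\<forall>a\<in>A. le l a" unfolding lower_bounds_def by simp_all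
    have "A \<inter> C \<subseteq> {z\<in>?P. le l z}" using AP[OF A] la by blast
    then have "tau closure_of (A \<inter> C) \<subseteq> {z\<in>?P. le l z}"
      by (rule closure_of_minimal[OF _ up_closed[OF pr lP]])
    then show "le l d" using dA[OF A] by blast
  qed
  have lo: "d \<in> lower_bounds ?P le (fam_upper ?P le F)"
    unfolding lower_bounds_def
  proof (intro CollectI conjI ballI dP)
    fix u assume "u \<in> fam_upper ?P le F"
    then obtain A where A: "A \<in> F" and uA: "u \<in> upper_bounds ?P le A" unfolding fam_upper_def by blast
    from uA have uP: "u \<in> ?P" and ua: "\<forall>a\<in>A. le a u" unfolding upper_bounds_def by simp_all
    have "A \<inter> C \<subseteq> {z\<in>?P. le z u}" using AP[OF A] ua by blast
    then have "tau closure_of (A \<inter> C) \<subseteq> {z\<in>?P. le z u}"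
      by (rule closure_of_minimal[OF _ down_closed[OF pr uP]])
    then show "le d u" using dA[OF A] by blast
  qed
  have c1: "is_meet ?P le (fam_upper ?P le F) x" and c2: "is_join ?P le (fam_lower ?P le F) x"
    using conv unfolding order_converges_def by simp_all
  have xd: "le x d" using c2 up unfolding is_join_def by blast
  have dx: "le d x" using c1 lo unfolding is_meet_def by blast
  have xP: "x \<in> ?P" using c1 unfolding is_meet_def lower_bounds_def by blast
  have po: "partial_order_on_set ?P le" using pr unfolding priestley_space_def by blast
  then have anti: "\<forall>x\<in>?P. \<forall>y\<in>?P. le x y \<and> le y x \<longrightarrow> x = y"
    unfolding partial_order_on_set_def by blast
  have "x = d" using anti xP dP xd dx by blast
  then show ?thesis using dC by simp
qed

theorem corollary2p2:
  fixes tau :: "'a topology" and le :: "'a \<Rightarrow> 'a \<Rightarrow> bool"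
  assumes "priestley_space tau le"
  shows "{U. openin tau U} \<subseteq> order_convergence_topology (topspace tau) le"
proof
  fix U assume "U \<in> {U. openin tau U}"
  then have U: "openin tau U" by simp
  show "U \<in> order_convergence_topology (topspace tau) le"
    unfolding order_convergence_topology_def
  proof (intro CollectI conjI allI ballI impI)
    show "U \<subseteq> topspace tau" using U openin_subset by auto
    fix x F assume x: "x \<in> U" and h: "set_filter_on (topspace tau) F \<and> order_converges (topspace tau) le F x"
    have hF: "set_filter_on (topspace tau) F" and hc: "order_converges (topspace tau) le F x" using h by simp_all
    have sup: "\<forall>A\<in>F. \<forall>B. A \<subseteq> B \<and> B \<subseteq> topspace tau \<longrightarrow> B \<in> F"
      using hF unfolding set_filter_on_def by (elim conjE)
    have sub: "\<forall>A\<in>F. A \<subseteq> topspace tau" using hF unfolding set_filter_on_def by (elim conjE)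
    show "U \<in> F"
    proof (rule ccontr)
      assume nU: "U \<notin> F"
      have "\<forall>A\<in>F. A \<inter> (topspace tau - U) \<noteq> {}"
      proof
        fix A assume A: "A \<in> F"
        show "A \<inter> (topspace tau - U) \<noteq> {}"
        proof
          assume "A \<inter> (topspace tau - U) = {}"
          moreover have "A \<subseteq> topspace tau" using sub A by blast
          ultimately have "A \<subseteq> U" by blast
          then show False using sup A nU \<open>U \<subseteq> topspace tau\<close> by blast
        qed
      qed
      moreover have "closedin tau (topspace tau - U)" using U by (rule closedin_diff[OF closedin_topspace])
      ultimately have "x \<in> topspace tau - U" using key[OF assms hF hc] by blast
      then show False using x by auto
    qed
  qed
qed

end
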